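(* For every integer $n\ge 3$, let $\kappa(K_n\times K_n)$ denote the largest integer $k$ such that $K_n\times K_n$ has a weak $k$-resolving set. Then $$\kappa(K_n\times K_n)=\begin{cases}6, & n=3;\\ 2n+2, & n\ge 4.\end{cases}$$
   Context: $K_n\times K_n$ denotes the direct product of two complete graphs on $n$ vertices: its vertex set is $V=[n]\times[n]$ (where $[n]=\{1,\dots,n\}$), and $(i,j)$ is adjacent to $(i',j')$ if and only if $i\neq i'$ and $j\ne j'$. For a connected graph $G$ with distance $d_G$, vertices $x,y,z$ and a set $S\subseteq V(G)$, let $\Delta_z(x,y)=|d_G(x,z)-d_G(y,z)|$ and $\Delta_S(x,y)=\sum_{z\in S}\Delta_z(x,y)$. For an integer $k\ge1$, a set $S\subseteq V(G)$ is a weak $k$-resolving set of $G$ if $\Delta_S(x,y)\ge k$ for every two distinct vertices $x,y\in V(G)$. *)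

theory Defs
  imports Main
begin

definition edge_rel :: "'a set \<Rightarrow> ('a \<Rightarrow> 'a \<Rightarrow> bool) \<Rightarrow> ('a \<times> 'a) set" where
  "edge_rel V E = {(u, v). u \<in> V \<and> v \<in> V \<and> E u v}"

definition gdist :: "'a set \<Rightarrow> ('a \<Rightarrow> 'a \<Rightarrow> bool) \<Rightarrow> 'a \<Rightarrow> 'a \<Rightarrow> nat" where
  "gdist V E x y = (LEAST k. (x, y) \<in> (edge_rel V E) ^^ k)"

definition Delta_set :: "'a set \<Rightarrow> ('a \<Rightarrow> 'a \<Rightarrow> bool) \<Rightarrow> 'a set \<Rightarrow> 'a \<Rightarrow> 'a \<Rightarrow> int" where
  "Delta_set V E S x y =
     (\<Sum>z\<in>S. \<bar>int (gdist V E x z) - int (gdist V E y z)\<bar>)"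

definition weak_k_resolving :: "'a set \<Rightarrow> ('a \<Rightarrow> 'a \<Rightarrow> bool) \<Rightarrow> nat \<Rightarrow> 'a set \<Rightarrow> bool" where
  "weak_k_resolving V E k S \<longleftrightarrow> k \<ge> 1 \<and> S \<subseteq> V \<and>
     (\<forall>x\<in>V. \<forall>y\<in>V. x \<noteq> y \<longrightarrow> Delta_set V E S x y \<ge> int k)"

definition kappa :: "'a set \<Rightarrow> ('a \<Rightarrow> 'a \<Rightarrow> bool) \<Rightarrow> nat" where
  "kappa V E = (GREATEST k. \<exists>S. weak_k_resolving V E k S)"

text \<open>K_n x K_n (direct product of complete graphs) on [n] x [n].\<close>
definition KK_vertices :: "nat \<Rightarrow> (nat \<times> nat) set" where
  "KK_vertices n = {1..n} \<times> {1..n}"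

definition KK_adj :: "nat \<times> nat \<Rightarrow> nat \<times> nat \<Rightarrow> bool" where
  "KK_adj u v \<longleftrightarrow> fst u \<noteq> fst v \<and> snd u \<noteq> snd v"

end

theory Submission
  imports Defs
begin

definition DD :: "nat \<times> nat \<Rightarrow> nat \<times> nat \<Rightarrow> nat" where
  "DD u v = (if u = v then 0 else if fst u \<noteq> fst v \<and> snd u \<noteq> snd v then 1 else 2)"

lemma ex_other:
  assumes "(n::nat) \<ge> 3" "b \<in> {1..n}" "c \<in> {1..n}"
  shows "\<exists>j\<in>{1..n}. j \<noteq> b \<and> j \<noteq> c"
proof -
  have "{1..n} - {b, c} \<noteq> {}"
  proof
    assume "{1..n} - {b, c} = {}"
    then have "{1..n} \<subseteq> {b, c}" by blast
    then have "card {1..n} \<le> card {b, c}" by (intro card_mono) auto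
    also have "\<dots> \<le> 2" by (simp add: card_insert_le_m1)
    finally show False using assms by simp
  qed
  then show ?thesis by blast
qed

lemma gdist_KK:
  assumes n: "n \<ge> 3" and x: "x \<in> KK_vertices n" and y: "y \<in> KK_vertices n"
  shows "gdist (KK_vertices n) KK_adj x y = DD x y"
proof -
  let ?R = "edge_rel (KK_vertices n) KK_adj"
  have R1: "(x, y) \<in> ?R ^^ 1 \<longleftrightarrow> KK_adj x y"
    using x y by (simp add: edge_rel_def)
  show ?thesis
  proof (cases "x = y")
    case True
    then show ?thesis unfolding gdist_def DD_def by (intro Least_equality) auto
  next
    case ne: False
    show ?thesis
    proof (cases "KK_adj x y")
      case True
      then have "DD x y = 1" using ne by (simp add: DD_def KK_adj_def)
      moreover have "(LEAST k. (x, y) \<in> ?R ^^ k) = 1"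
      proof (intro Least_equality)
        show "(x, y) \<in> ?R ^^ 1" using R1 True by simp
        fix m assume "(x, y) \<in> ?R ^^ m"
        then show "1 \<le> m" using ne by (cases m) auto
      qed
      ultimately show ?thesis by (simp add: gdist_def)
    next
      case False
      then have "DD x y = 2" using ne by (simp add: DD_def KK_adj_def)
      obtain a b c d where xe: "x = (a, b)" and ye: "y = (c, d)" by fastforce
      have ab: "a \<in> {1..n}" "b \<in> {1..n}" "c \<in> {1..n}" "d \<in> {1..n}"
        using x y xe ye by (auto simp: KK_vertices_def)
      obtain i where i: "i \<in> {1..n}" "i \<noteq> a" "i \<noteq> c" using ex_other[OF n ab(1) ab(3)] by blast
      obtain j where j: "j \<in> {1..n}" "j \<noteq> b" "j \<noteq> d" using ex_other[OF n ab(2) ab(4)] by blast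
      have "(x, (i, j)) \<in> ?R" "((i, j), y) \<in> ?R"
        using x y i j xe ye by (auto simp: edge_rel_def KK_adj_def KK_vertices_def)
      then have R2: "(x, y) \<in> ?R ^^ 2"
        by (auto simp: numeral_2_eq_2)
      have "(LEAST k. (x, y) \<in> ?R ^^ k) = 2"
      proof (intro Least_equality)
        show "(x, y) \<in> ?R ^^ 2" by (rule R2)
        fix m assume m: "(x, y) \<in> ?R ^^ m"
        show "2 \<le> m"
        proof (rule ccontr)
          assume "\<not> 2 \<le> m"
          then have "m = 0 \<or> m = 1" by auto
          then show False using m ne R1 False by auto
        qed
      qed
      then show ?thesis using \<open>DD x y = 2\<close> by (simp add: gdist_def)
    qed
  qed
qed


definition ff :: "nat \<times> nat \<Rightarrow> nat \<times> nat \<Rightarrow> nat \<times> nat \<Rightarrow> int" where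
  "ff x y z = \<bar>int (DD x z) - int (DD y z)\<bar>"

lemma finite_V: "finite (KK_vertices n)"
  by (simp add: KK_vertices_def)

lemma Delta_eq:
  assumes "n \<ge> 3" "S \<subseteq> KK_vertices n" "x \<in> KK_vertices n" "y \<in> KK_vertices n"
  shows "Delta_set (KK_vertices n) KK_adj S x y = (\<Sum>z\<in>S. ff x y z)"
  unfolding Delta_set_def ff_def
proof (rule sum.cong[OF refl])
  fix z assume "z \<in> S"
  then have z: "z \<in> KK_vertices n" using assms(2) by blast
  show "\<bar>int (gdist (KK_vertices n) KK_adj x z) - int (gdist (KK_vertices n) KK_adj y z)\<bar> =
    \<bar>int (DD x z) - int (DD y z)\<bar>"
    using gdist_KK[OF assms(1) assms(3) z] gdist_KK[OF assms(1) assms(4) z] by simp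
qed

lemma ff_nonneg: "ff x y z \<ge> 0" by (simp add: ff_def)

lemma ff_le1: "z \<noteq> x \<Longrightarrow> z \<noteq> y \<Longrightarrow> ff x y z \<le> 1"
  unfolding ff_def DD_def by (simp split: if_splits)

lemma ff_le2: "ff x y z \<le> 2"
  unfolding ff_def DD_def by (simp split: if_splits)

lemma helper_lower:
  fixes f :: "'a \<Rightarrow> int"
  assumes fin: "finite V" and BV: "B \<subseteq> V" and CB: "C \<subseteq> B"
    and f0: "\<And>z. z \<in> V \<Longrightarrow> f z \<ge> 0"
    and f1: "\<And>z. z \<in> B \<Longrightarrow> f z \<ge> 1" and f2: "\<And>z. z \<in> C \<Longrightarrow> f z \<ge> 2"
  shows "(\<Sum>z\<in>V. f z) \<ge> int (card B) + int (card C)"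
proof -
  have fB: "finite B" using fin BV by (rule rev_finite_subset)
  have fC: "finite C" using fB CB by (rule rev_finite_subset)
  have a: "(\<Sum>z\<in>B. f z) \<le> (\<Sum>z\<in>V. f z)"
    by (rule sum_mono2[OF fin BV]) (simp add: f0)
  have b: "(\<Sum>z\<in>B. f z) = (\<Sum>z\<in>B - C. f z) + (\<Sum>z\<in>C. f z)"
    by (rule sum.subset_diff[OF CB fB])
  have c: "(\<Sum>z\<in>B - C. (1::int)) \<le> (\<Sum>z\<in>B - C. f z)"
    by (rule sum_mono) (simp add: f1)
  have d: "(\<Sum>z\<in>C. (2::int)) \<le> (\<Sum>z\<in>C. f z)"
    by (rule sum_mono) (simp add: f2)
  have e: "card (B - C) = card B - card C" using card_Diff_subset[OF fC CB] .
  have g: "card C \<le> card B" using card_mono[OF fB CB] .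
  have "(\<Sum>z\<in>B - C. (1::int)) = int (card B) - int (card C)" using e g by simp
  moreover have "(\<Sum>z\<in>C. (2::int)) = 2 * int (card C)" by simp
  ultimately show ?thesis using a b c d by linarith
qed

lemma helper_upper:
  fixes f :: "'a \<Rightarrow> int"
  assumes fin: "finite V" and CV: "C \<subseteq> V" and DC: "D \<subseteq> C"
    and f0: "\<And>z. z \<in> V - C \<Longrightarrow> f z = 0"
    and f1: "\<And>z. z \<in> C - D \<Longrightarrow> f z \<le> 1" and f2: "\<And>z. z \<in> D \<Longrightarrow> f z \<le> 2"
  shows "(\<Sum>z\<in>V. f z) \<le> int (card C) + int (card D)"
proof -
  have fC: "finite C" using fin CV by (rule rev_finite_subset)
  have fD: "finite D" using fC DC by (rule rev_finite_subset)
  have a: "(\<Sum>z\<in>V. f z) = (\<Sum>z\<in>C. f z)"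
    by (rule sum.mono_neutral_right[OF fin CV]) (simp add: f0)
  have b: "(\<Sum>z\<in>C. f z) = (\<Sum>z\<in>C - D. f z) + (\<Sum>z\<in>D. f z)"
    by (rule sum.subset_diff[OF DC fC])
  have c: "(\<Sum>z\<in>C - D. f z) \<le> (\<Sum>z\<in>C - D. (1::int))"
    by (rule sum_mono) (simp add: f1)
  have d: "(\<Sum>z\<in>D. f z) \<le> (\<Sum>z\<in>D. (2::int))"
    by (rule sum_mono) (simp add: f2)
  have e: "card (C - D) = card C - card D" using card_Diff_subset[OF fD DC] .
  have g: "card D \<le> card C" using card_mono[OF fC DC] .
  have "(\<Sum>z\<in>C - D. (1::int)) = int (card C) - int (card D)" using e g by simp
  moreover have "(\<Sum>z\<in>D. (2::int)) = 2 * int (card D)" by simp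
  ultimately show ?thesis using a b c d by linarith
qed

lemma card_two: "b \<noteq> d \<Longrightarrow> card {b, d} = 2" by simp

lemma lower_row:
  assumes n: "n \<ge> 3" and a: "a \<in> {1..n}" and b: "b \<in> {1..n}" and d: "d \<in> {1..n}" and bd: "b \<noteq> d"
  shows "(\<Sum>z\<in>KK_vertices n. ff (a, b) (a, d) z) \<ge> 2 * int n + 2"
proof -
  let ?B = "{1..n} \<times> {b, d}"
  let ?C = "{(a, b), (a, d)}"
  have "(\<Sum>z\<in>KK_vertices n. ff (a, b) (a, d) z) \<ge> int (card ?B) + int (card ?C)"
  proof (rule helper_lower[OF finite_V])
    show "?B \<subseteq> KK_vertices n" using b d by (auto simp: KK_vertices_def)
    show "?C \<subseteq> ?B" using a by auto
    show "0 \<le> ff (a, b) (a, d) z" for z by (rule ff_nonneg)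
    show "1 \<le> ff (a, b) (a, d) z" if "z \<in> ?B" for z
      using that bd by (cases z) (auto simp: ff_def DD_def)
    show "2 \<le> ff (a, b) (a, d) z" if "z \<in> ?C" for z
      using that bd by (auto simp: ff_def DD_def)
  qed
  moreover have cB: "card ?B = n * 2" using bd card_two[OF bd] by (simp add: card_cartesian_product)
  moreover have cC: "card ?C = 2" using bd by simp
  moreover have "int (card ?B) + int (card ?C) = 2 * int n + 2" unfolding cB cC by simp
  ultimately show ?thesis by linarith
qed

lemma lower_col:
  assumes n: "n \<ge> 3" and a: "a \<in> {1..n}" and b: "b \<in> {1..n}" and c: "c \<in> {1..n}" and ac: "a \<noteq> c"
  shows "(\<Sum>z\<in>KK_vertices n. ff (a, b) (c, b) z) \<ge> 2 * int n + 2"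
proof -
  let ?B = "{a, c} \<times> {1..n}"
  let ?C = "{(a, b), (c, b)}"
  have "(\<Sum>z\<in>KK_vertices n. ff (a, b) (c, b) z) \<ge> int (card ?B) + int (card ?C)"
  proof (rule helper_lower[OF finite_V])
    show "?B \<subseteq> KK_vertices n" using a c by (auto simp: KK_vertices_def)
    show "?C \<subseteq> ?B" using b by auto
    show "0 \<le> ff (a, b) (c, b) z" for z by (rule ff_nonneg)
    show "1 \<le> ff (a, b) (c, b) z" if "z \<in> ?B" for z
      using that ac by (cases z) (auto simp: ff_def DD_def)
    show "2 \<le> ff (a, b) (c, b) z" if "z \<in> ?C" for z
      using that ac by (auto simp: ff_def DD_def)
  qed
  moreover have cB: "card ?B = 2 * n" using ac card_two[OF ac] by (simp add: card_cartesian_product)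
  moreover have cC: "card ?C = 2" using ac by simp
  moreover have "int (card ?B) + int (card ?C) = 2 * int n + 2" unfolding cB cC by simp
  ultimately show ?thesis by linarith
qed

lemma lower_adj:
  assumes n: "n \<ge> 3" and a: "a \<in> {1..n}" and b: "b \<in> {1..n}" and c: "c \<in> {1..n}"
    and d: "d \<in> {1..n}" and ac: "a \<noteq> c" and bd: "b \<noteq> d"
  shows "(\<Sum>z\<in>KK_vertices n. ff (a, b) (c, d) z) \<ge> 4 * int n - 6"
proof -
  let ?P = "{a, c} \<times> {1..n}"
  let ?Q = "{1..n} \<times> {b, d}"
  let ?B = "(?P \<union> ?Q) - {(a, d), (c, b)}"
  have "(\<Sum>z\<in>KK_vertices n. ff (a, b) (c, d) z) \<ge> int (card ?B) + int (card ({}::(nat\<times>nat) set))"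
  proof (rule helper_lower[OF finite_V])
    show "?B \<subseteq> KK_vertices n" using a b c d by (auto simp: KK_vertices_def)
    show "{} \<subseteq> ?B" by simp
    show "0 \<le> ff (a, b) (c, d) z" for z by (rule ff_nonneg)
    show "1 \<le> ff (a, b) (c, d) z" if "z \<in> ?B" for z
      using that ac bd by (cases z) (auto simp: ff_def DD_def)
    show "2 \<le> ff (a, b) (c, d) z" if "z \<in> {}" for z
      using that by simp
  qed
  moreover have "card ?B = 4 * n - 6"
  proof -
    have fP: "finite ?P" and fQ: "finite ?Q" by auto
    have PQ: "?P \<inter> ?Q = {a, c} \<times> {b, d}" using a b c d by auto
    have cP: "card ?P = 2 * n" using ac card_two[OF ac] by (simp add: card_cartesian_product)
    have cQ: "card ?Q = n * 2" using bd card_two[OF bd] by (simp add: card_cartesian_product)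
    have cPQ: "card (?P \<inter> ?Q) = 4" unfolding PQ card_cartesian_product card_two[OF ac] card_two[OF bd] by simp
    have u: "card (?P \<union> ?Q) + card (?P \<inter> ?Q) = card ?P + card ?Q"
      using card_Un_Int[OF fP fQ] by simp
    have sub: "{(a, d), (c, b)} \<subseteq> ?P \<union> ?Q" using a b c d by auto
    have "card ?B = card (?P \<union> ?Q) - card {(a, d), (c, b)}"
      by (rule card_Diff_subset) (simp, rule sub)
    moreover have "card {(a, d), (c, b)} = 2" using ac by simp
    ultimately show ?thesis using u cP cQ cPQ n by linarith
  qed
  ultimately show ?thesis using n by simp
qed

lemma upper_row:
  assumes n: "n \<ge> 3"
  shows "(\<Sum>z\<in>KK_vertices n. ff (1, 1) (1, 2) z) \<le> 2 * int n + 2"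
proof -
  let ?C = "{1..n} \<times> {1::nat, 2}"
  let ?D = "{(1::nat, 1::nat), (1, 2)}"
  have "(\<Sum>z\<in>KK_vertices n. ff (1, 1) (1, 2) z) \<le> int (card ?C) + int (card ?D)"
  proof (rule helper_upper[OF finite_V])
    show "?C \<subseteq> KK_vertices n" using n by (auto simp: KK_vertices_def)
    show "?D \<subseteq> ?C" using n by auto
    show "ff (1, 1) (1, 2) z = 0" if "z \<in> KK_vertices n - ?C" for z
      using that by (cases z) (auto simp: ff_def DD_def KK_vertices_def)
    show "ff (1, 1) (1, 2) z \<le> 1" if "z \<in> ?C - ?D" for z
      using that by (intro ff_le1) auto
    show "ff (1, 1) (1, 2) z \<le> 2" for z by (rule ff_le2)
  qed
  moreover have cC: "card ?C = n * 2" by (simp add: card_cartesian_product)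
  moreover have cD: "card ?D = 2" by simp
  moreover have "int (card ?C) + int (card ?D) = 2 * int n + 2" unfolding cC cD by simp
  ultimately show ?thesis by linarith
qed

lemma upper_3:
  shows "(\<Sum>z\<in>KK_vertices 3. ff (1, 1) (2, 2) z) \<le> 6"
proof -
  let ?C = "{(1::nat, 1::nat), (1, 3), (2, 2), (2, 3), (3, 1), (3, 2)}"
  let ?D = "{} :: (nat \<times> nat) set"
  have "(\<Sum>z\<in>KK_vertices 3. ff (1, 1) (2, 2) z) \<le> int (card ?C) + int (card ?D)"
  proof (rule helper_upper[OF finite_V])
    show "?C \<subseteq> KK_vertices 3" by (auto simp: KK_vertices_def)
    show "?D \<subseteq> ?C" by simp
    show "ff (1, 1) (2, 2) z = 0" if "z \<in> KK_vertices 3 - ?C" for z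
    proof -
      obtain i j where z: "z = (i, j)" by fastforce
      have "i \<in> {1..3}" "j \<in> {1..3}" using that z by (auto simp: KK_vertices_def)
      then have "i = 1 \<or> i = 2 \<or> i = 3" "j = 1 \<or> j = 2 \<or> j = 3" by auto
      then have "z = (1, 2) \<or> z = (2, 1) \<or> z = (3, 3)" using that z by auto
      then show ?thesis by (auto simp: ff_def DD_def)
    qed
    show "ff (1, 1) (2, 2) z \<le> 1" if "z \<in> ?C - ?D" for z
      using that by (auto simp: ff_def DD_def)
    show "ff (1, 1) (2, 2) z \<le> 2" if "z \<in> ?D" for z using that by simp
  qed
  moreover have "card ?C = 6" by simp
  ultimately show ?thesis by simp
qed

theorem mainTheorem1:
  fixes n :: nat
  assumes "n \<ge> 3"
  shows "kappa (KK_vertices n) KK_adj = (if n = 3 then 6 else 2 * n + 2)"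
proof -
  let ?V = "KK_vertices n"
  let ?b = "(if n = 3 then 6 else 2 * n + 2) :: nat"
  have n: "n \<ge> 3" by (rule assms)
  have lower: "Delta_set ?V KK_adj ?V x y \<ge> int ?b"
    if x: "x \<in> ?V" and y: "y \<in> ?V" and xy: "x \<noteq> y" for x y
  proof -
    obtain a b where xe: "x = (a, b)" by fastforce
    obtain c d where ye: "y = (c, d)" by fastforce
    have ab: "a \<in> {1..n}" "b \<in> {1..n}" "c \<in> {1..n}" "d \<in> {1..n}"
      using x y xe ye by (auto simp: KK_vertices_def)
    have eq: "Delta_set ?V KK_adj ?V x y = (\<Sum>z\<in>?V. ff x y z)"
      by (rule Delta_eq[OF n subset_refl x y])
    have "(\<Sum>z\<in>?V. ff x y z) \<ge> int ?b"
    proof (cases "a = c")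
      case True
      then have "b \<noteq> d" using xy xe ye by simp
      from lower_row[OF n ab(1) ab(2) ab(4) this] show ?thesis using True xe ye by auto
    next
      case ac: False
      show ?thesis
      proof (cases "b = d")
        case True
        from lower_col[OF n ab(1) ab(2) ab(3) ac] show ?thesis using True xe ye by auto
      next
        case False
        from lower_adj[OF n ab ac False] show ?thesis using xe ye n by auto
      qed
    qed
    then show ?thesis using eq by simp
  qed
  have P: "\<exists>S. weak_k_resolving ?V KK_adj ?b S"
    using lower unfolding weak_k_resolving_def by (intro exI[of _ ?V]) auto
  obtain x0 y0 where x0: "x0 \<in> ?V" and y0: "y0 \<in> ?V" and ne0: "x0 \<noteq> y0"
    and up: "(\<Sum>z\<in>?V. ff x0 y0 z) \<le> int ?b"
  proof (cases "n = 3")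
    case True
    show ?thesis
      by (rule that[of "(1,1)" "(2,2)"]) (use True upper_3 in \<open>auto simp: KK_vertices_def\<close>)
  next
    case False
    show ?thesis
      by (rule that[of "(1,1)" "(1,2)"]) (use False n upper_row[OF n] in \<open>auto simp: KK_vertices_def\<close>)
  qed
  have bound: "k \<le> ?b" if "\<exists>S. weak_k_resolving ?V KK_adj k S" for k
  proof -
    from that obtain S where S: "weak_k_resolving ?V KK_adj k S" by blast
    then have SV: "S \<subseteq> ?V" and kk: "Delta_set ?V KK_adj S x0 y0 \<ge> int k"
      using x0 y0 ne0 unfolding weak_k_resolving_def by auto
    have "Delta_set ?V KK_adj S x0 y0 = (\<Sum>z\<in>S. ff x0 y0 z)"
      by (rule Delta_eq[OF n SV x0 y0])
    also have "\<dots> \<le> (\<Sum>z\<in>?V. ff x0 y0 z)"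
      by (rule sum_mono2[OF finite_V SV]) (simp add: ff_nonneg)
    finally show ?thesis using kk up by linarith
  qed
  show ?thesis unfolding kappa_def
    by (rule Greatest_equality) (rule P, rule bound)
qed

end
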